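(* Let $f\in\mathrm{Homeo}(\mathbb T^2)$ be semiconjugate to a rigid rotation $R_\rho$ of $\mathbb S^1$, and let $\Omega\subset\mathbb T^2$ be an $f$-invariant externally transitive set. Then for any two semiconjugacies $h_1,h_2$ from $f$ to $R_\rho$ there is a rigid rotation $R$ of $\mathbb S^1$ with $h_1|_\Omega=(R\circ h_2)|_\Omega$.
   Context: A semiconjugacy from $f$ to $R_\rho(x)=x+\rho$ is a continuous surjection $h:\mathbb T^2\to\mathbb S^1$ with $h\circ f=R_\rho\circ h$. An $f$-invariant set $\Omega$ is externally transitive if for all $x,y\in\Omega$ and neighbourhoods $U_x,U_y$ of $x,y$ in $\mathbb T^2$ there is $n\in\mathbb N$ with $f^n(U_x)\cap U_y\neq\emptyset$. *)

theory Defs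
  imports "HOL-Analysis.Analysis"
begin

definition S1 :: "complex set" where
  "S1 = sphere 0 1"

definition T2 :: "(complex \<times> complex) set" where
  "T2 = S1 \<times> S1"

text \<open>Rigid rotation by angle rho (in turns): x + rho on R/Z corresponds to multiplication
  by exp(2 pi i rho) on the unit circle.\<close>
definition rot :: "real \<Rightarrow> complex \<Rightarrow> complex" where
  "rot \<rho> z = cis (2 * pi * \<rho>) * z"

definition is_homeo_T2 :: "(complex \<times> complex \<Rightarrow> complex \<times> complex) \<Rightarrow> bool" where
  "is_homeo_T2 f \<longleftrightarrow> (\<exists>g. homeomorphism T2 T2 f g)"

definition semiconj :: "(complex \<times> complex \<Rightarrow> complex \<times> complex) \<Rightarrow> real
    \<Rightarrow> (complex \<times> complex \<Rightarrow> complex) \<Rightarrow> bool" where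
  "semiconj f \<rho> h \<longleftrightarrow> continuous_on T2 h \<and> h ` T2 = S1 \<and>
     (\<forall>x\<in>T2. h (f x) = rot \<rho> (h x))"

definition f_invariant :: "(complex \<times> complex \<Rightarrow> complex \<times> complex)
    \<Rightarrow> (complex \<times> complex) set \<Rightarrow> bool" where
  "f_invariant f \<Omega> \<longleftrightarrow> \<Omega> \<subseteq> T2 \<and> f ` \<Omega> = \<Omega>"

definition ext_transitive :: "(complex \<times> complex \<Rightarrow> complex \<times> complex)
    \<Rightarrow> (complex \<times> complex) set \<Rightarrow> bool" where
  "ext_transitive f \<Omega> \<longleftrightarrow>
     (\<forall>x\<in>\<Omega>. \<forall>y\<in>\<Omega>. \<forall>U V. openin (top_of_set T2) U \<longrightarrow> x \<in> U \<longrightarrow>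
        openin (top_of_set T2) V \<longrightarrow> y \<in> V \<longrightarrow>
        (\<exists>n::nat. n \<ge> 1 \<and> (f ^^ n) ` U \<inter> V \<noteq> {}))"

end

theory Submission
  imports Defs
begin

lemma mcnj: "norm (z::complex) = 1 \<Longrightarrow> z * cnj z = 1"
proof -
  assume a: "norm z = 1"
  then have "z \<noteq> 0" by auto
  moreover have "z * cnj z = z / z" using divide_conv_cnj[OF a, of z] by simp
  ultimately show ?thesis by simp
qed

theorem mainTheorem7:
  fixes f :: "complex \<times> complex \<Rightarrow> complex \<times> complex"
    and \<rho> :: real
    and \<Omega> :: "(complex \<times> complex) set"
    and h1 h2 :: "complex \<times> complex \<Rightarrow> complex"
  assumes "is_homeo_T2 f"
    and "\<exists>h. semiconj f \<rho> h"
    and "f_invariant f \<Omega>"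
    and "ext_transitive f \<Omega>"
    and "semiconj f \<rho> h1"
    and "semiconj f \<rho> h2"
  shows "\<exists>\<theta>::real. \<forall>x\<in>\<Omega>. h1 x = rot \<theta> (h2 x)"
proof -
  define g where "g x = h1 x * cnj (h2 x)" for x
  have fT: "f x \<in> T2" if "x \<in> T2" for x
    using assms(1) that unfolding is_homeo_T2_def homeomorphism_def by blast
  have fnT: "(f ^^ n) x \<in> T2" if "x \<in> T2" for x n
    using that by (induction n) (auto intro: fT)
  have h1S: "norm (h1 x) = 1" if "x \<in> T2" for x
    using assms(5) that unfolding semiconj_def S1_def by auto
  have h2S: "norm (h2 x) = 1" if "x \<in> T2" for x
    using assms(6) that unfolding semiconj_def S1_def by auto
  have ginv: "g (f x) = g x" if "x \<in> T2" for x
  proof -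
    have "g (f x) = (cis (2*pi*\<rho>) * cnj (cis (2*pi*\<rho>))) * g x"
      using assms(5,6) that unfolding semiconj_def rot_def g_def
      by (simp add: mult_ac)
    also have "cis (2*pi*\<rho>) * cnj (cis (2*pi*\<rho>)) = 1"
      by (rule mcnj) simp
    finally show ?thesis by simp
  qed
  have gninv: "g ((f ^^ n) x) = g x" if "x \<in> T2" for x n
    using that by (induction n) (auto simp: ginv fnT)
  have gcont: "continuous_on T2 g"
    unfolding g_def using assms(5,6) unfolding semiconj_def
    by (intro continuous_intros) auto
  have OT: "\<Omega> \<subseteq> T2" using assms(3) unfolding f_invariant_def by auto
  have const: "g x = g y" if xO: "x \<in> \<Omega>" and yO: "y \<in> \<Omega>" for x y
  proof (rule ccontr)
    assume ne: "g x \<noteq> g y"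
    define e where "e = dist (g x) (g y) / 2"
    have e: "e > 0" using ne by (simp add: e_def)
    define U where "U = T2 \<inter> g -` ball (g x) e"
    define V where "V = T2 \<inter> g -` ball (g y) e"
    have oU: "openin (top_of_set T2) U" and oV: "openin (top_of_set T2) V"
      unfolding U_def V_def using gcont
      by (auto intro!: continuous_openin_preimage_gen)
    have xU: "x \<in> U" and yV: "y \<in> V" using that OT e by (auto simp: U_def V_def)
    obtain n where "n \<ge> 1 \<and> (f ^^ n) ` U \<inter> V \<noteq> {}"
      using assms(4)[unfolded ext_transitive_def, rule_format, OF xO yO oU xU oV yV]
      by blast
    then have "(f ^^ n) ` U \<inter> V \<noteq> {}" by blast
    then obtain u where u: "u \<in> U" "(f ^^ n) u \<in> V" by blast
    have "g u \<in> ball (g x) e" "g u \<in> ball (g y) e"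
      using u gninv[of u n] by (auto simp: U_def V_def)
    then have "dist (g x) (g y) < 2*e"
      by (smt (verit) dist_commute dist_triangle mem_ball)
    then show False by (simp add: e_def)
  qed
  show ?thesis
  proof (cases "\<Omega> = {}")
    case True then show ?thesis by auto
  next
    case False
    then obtain x0 where x0: "x0 \<in> \<Omega>" by blast
    define c where "c = g x0"
    have "x0 \<in> T2" using x0 OT by auto
    then have nc: "norm c = 1" using h1S h2S by (simp add: c_def g_def norm_mult)
    then have c0: "c \<noteq> 0" by auto
    define \<theta> where "\<theta> = Arg c / (2*pi)"
    have cc: "cis (2*pi*\<theta>) = c"
      using cis_Arg[OF c0] nc by (simp add: \<theta>_def sgn_div_norm)
    show ?thesis
    proof (intro exI ballI)
      fix x assume x: "x \<in> \<Omega>"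
      have "h2 x * cnj (h2 x) = 1"
        using h2S[of x] x OT
        by (intro mcnj) auto
      then have "h1 x = g x * h2 x" by (simp add: g_def mult_ac)
      also have "g x = c" using const[OF x x0] by (simp add: c_def)
      finally show "h1 x = rot \<theta> (h2 x)" by (simp add: rot_def cc)
    qed
  qed
qed

end
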